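(* Assume Condition (T) (see context). Let $i\le d$ and suppose $\alpha_i>\widetilde\alpha_i=\alpha_{j_0}$ for some $j_0$ with $i\vartriangleleft j_0$. For $s\in\mathbb N$ set $u_i(s)=\mathbb E\,\pi_{ij_0}(s)^{\alpha_{j_0}}$. Then the limit $u_i=\lim_{s\to\infty}u_i(s)$ exists, and $0<u_i<\infty$.
   Context: $(\mathbf A_t)_{t\in\mathbb Z}$ is an i.i.d. sequence of copies of a random $d\times d$ matrix $\mathbf A$, entries $A_{ij,t}$, jointly with random vectors $\mathbf B_t$ forming i.i.d. copies of $(\mathbf A,\mathbf B)$. Condition (T): (T-1) $\mathbf A\ge 0$, $\mathbf B\ge 0$ entrywise a.s.; (T-2) $\mathbb P(B_i=0)<1$; (T-3) $\mathbb P(A_{ij}=0)=1$ whenever $i>j$; (T-4) there exist $\alpha_1,\dots,\alpha_d>0$, pairwise distinct, with $\mathbb E A_{ii}^{\alpha_i}=1$; (T-5) $\mathbb E A_{ij}^{\alpha_i}<\infty$; (T-6) $\mathbb E B_i^{\alpha_i}<\infty$; (T-7) $\mathbb E[A_{ii}^{\alpha_i}\log^+A_{ii}]<\infty$; (T-8) the law of $\log A_{ii}$ given $\{A_{ii}>0\}$ is non-arithmetic. Relations: $i\preccurlyeq j$ if $\mathbb P(A_{ij}>0)>0$; $i\trianglelefteq j$ if there is a chain $i=i(0)\preccurlyeq\dots\preccurlyeq i(m)=j$ ($m\ge0$); $i\vartriangleleft j$ if $i\trianglelefteq j$, $i\ne j$; $\widetilde\alpha_i=\min\{\alpha_j:i\trianglelefteq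 j\}$. $\pi_{ij}(s)$ denotes the $(i,j)$ entry of the product $\mathbf A_0\mathbf A_{-1}\cdots\mathbf A_{-s+1}$. *)

theory Defs
  imports "HOL-Probability.Probability"
begin

text \<open>Random matrices are modelled as A t \<omega> i j (entry (i,j) of A_t at outcome \<omega>),
  random vectors as B t \<omega> i, with indices i, j ranging over {1..d}.\<close>

definition coord_idx :: "nat \<Rightarrow> ((nat \<times> nat) + nat) set" where
  "coord_idx d = Inl ` ({1..d} \<times> {1..d}) \<union> Inr ` {1..d}"

definition AB_vec ::
  "nat \<Rightarrow> (int \<Rightarrow> 'a \<Rightarrow> nat \<Rightarrow> nat \<Rightarrow> real) \<Rightarrow> (int \<Rightarrow> 'a \<Rightarrow> nat \<Rightarrow> real)
     \<Rightarrow> int \<Rightarrow> 'a \<Rightarrow> ((nat \<times> nat) + nat) \<Rightarrow> real" where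
  "AB_vec d A B t \<omega> = (\<lambda>k\<in>coord_idx d. case k of Inl (i, j) \<Rightarrow> A t \<omega> i j | Inr i \<Rightarrow> B t \<omega> i)"

definition AB_space :: "nat \<Rightarrow> (((nat \<times> nat) + nat) \<Rightarrow> real) measure" where
  "AB_space d = PiM (coord_idx d) (\<lambda>_. borel)"

definition iid_AB ::
  "'a measure \<Rightarrow> nat \<Rightarrow> (int \<Rightarrow> 'a \<Rightarrow> nat \<Rightarrow> nat \<Rightarrow> real) \<Rightarrow> (int \<Rightarrow> 'a \<Rightarrow> nat \<Rightarrow> real) \<Rightarrow> bool" where
  "iid_AB M d A B \<longleftrightarrow>
     prob_space.indep_vars M (\<lambda>_. AB_space d) (AB_vec d A B) UNIV \<and>
     (\<forall>t. distr M (AB_space d) (AB_vec d A B t) = distr M (AB_space d) (AB_vec d A B 0))"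

definition nonarith_log :: "'a measure \<Rightarrow> ('a \<Rightarrow> real) \<Rightarrow> bool" where
  "nonarith_log M X \<longleftrightarrow>
     \<not> (\<exists>h>0. AE \<omega> in M. X \<omega> > 0 \<longrightarrow> ln (X \<omega>) \<in> {h * real_of_int k | k. True})"

definition condT ::
  "'a measure \<Rightarrow> nat \<Rightarrow> (int \<Rightarrow> 'a \<Rightarrow> nat \<Rightarrow> nat \<Rightarrow> real) \<Rightarrow> (int \<Rightarrow> 'a \<Rightarrow> nat \<Rightarrow> real)
     \<Rightarrow> (nat \<Rightarrow> real) \<Rightarrow> bool" where
  "condT M d A B \<alpha> \<longleftrightarrow>
     \<comment> \<open>(T-1)\<close>
     (AE \<omega> in M. (\<forall>i\<in>{1..d}. \<forall>j\<in>{1..d}. A 0 \<omega> i j \<ge> 0) \<and> (\<forall>i\<in>{1..d}. B 0 \<omega> i \<ge> 0)) \<and>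
     \<comment> \<open>(T-2)\<close>
     (\<forall>i\<in>{1..d}. measure M {\<omega>\<in>space M. B 0 \<omega> i = 0} < 1) \<and>
     \<comment> \<open>(T-3)\<close>
     (\<forall>i\<in>{1..d}. \<forall>j\<in>{1..d}. i > j \<longrightarrow> measure M {\<omega>\<in>space M. A 0 \<omega> i j = 0} = 1) \<and>
     \<comment> \<open>(T-4)\<close>
     (\<forall>i\<in>{1..d}. \<alpha> i > 0) \<and> inj_on \<alpha> {1..d} \<and>
     (\<forall>i\<in>{1..d}. (\<integral>\<^sup>+\<omega>. ennreal (A 0 \<omega> i i powr \<alpha> i) \<partial>M) = 1) \<and>
     \<comment> \<open>(T-5)\<close>
     (\<forall>i\<in>{1..d}. \<forall>j\<in>{1..d}. (\<integral>\<^sup>+\<omega>. ennreal (A 0 \<omega> i j powr \<alpha> i) \<partial>M) < \<infinity>) \<and>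
     \<comment> \<open>(T-6)\<close>
     (\<forall>i\<in>{1..d}. (\<integral>\<^sup>+\<omega>. ennreal (B 0 \<omega> i powr \<alpha> i) \<partial>M) < \<infinity>) \<and>
     \<comment> \<open>(T-7)\<close>
     (\<forall>i\<in>{1..d}. (\<integral>\<^sup>+\<omega>. ennreal (A 0 \<omega> i i powr \<alpha> i * max 0 (ln (A 0 \<omega> i i))) \<partial>M) < \<infinity>) \<and>
     \<comment> \<open>(T-8)\<close>
     (\<forall>i\<in>{1..d}. nonarith_log M (\<lambda>\<omega>. A 0 \<omega> i i))"

definition prec_rel :: "'a measure \<Rightarrow> nat \<Rightarrow> (int \<Rightarrow> 'a \<Rightarrow> nat \<Rightarrow> nat \<Rightarrow> real) \<Rightarrow> nat \<Rightarrow> nat \<Rightarrow> bool" where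
  "prec_rel M d A i j \<longleftrightarrow> i \<in> {1..d} \<and> j \<in> {1..d} \<and> measure M {\<omega>\<in>space M. A 0 \<omega> i j > 0} > 0"

definition trile :: "'a measure \<Rightarrow> nat \<Rightarrow> (int \<Rightarrow> 'a \<Rightarrow> nat \<Rightarrow> nat \<Rightarrow> real) \<Rightarrow> nat \<Rightarrow> nat \<Rightarrow> bool" where
  "trile M d A i j \<longleftrightarrow> (prec_rel M d A)\<^sup>*\<^sup>* i j"

definition trilt :: "'a measure \<Rightarrow> nat \<Rightarrow> (int \<Rightarrow> 'a \<Rightarrow> nat \<Rightarrow> nat \<Rightarrow> real) \<Rightarrow> nat \<Rightarrow> nat \<Rightarrow> bool" where
  "trilt M d A i j \<longleftrightarrow> trile M d A i j \<and> i \<noteq> j"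

definition alpha_tilde ::
  "'a measure \<Rightarrow> nat \<Rightarrow> (int \<Rightarrow> 'a \<Rightarrow> nat \<Rightarrow> nat \<Rightarrow> real) \<Rightarrow> (nat \<Rightarrow> real) \<Rightarrow> nat \<Rightarrow> real" where
  "alpha_tilde M d A \<alpha> i = Min {\<alpha> j | j. j \<in> {1..d} \<and> trile M d A i j}"

text \<open>pi_prod d A s \<omega> i j = (i,j) entry of A_0 A_{-1} ... A_{-s+1} (identity for s = 0).\<close>
fun pi_prod :: "nat \<Rightarrow> (int \<Rightarrow> 'a \<Rightarrow> nat \<Rightarrow> nat \<Rightarrow> real) \<Rightarrow> nat \<Rightarrow> 'a \<Rightarrow> nat \<Rightarrow> nat \<Rightarrow> real" where
  "pi_prod d A 0 \<omega> i j = (if i = j then 1 else 0)"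
| "pi_prod d A (Suc s) \<omega> i j = (\<Sum>k\<in>{1..d}. pi_prod d A s \<omega> i k * A (- int s) \<omega> k j)"

end

theory Submission
  imports Defs "HOL-Probability.Probability"
begin

lemma amgm_le:
  fixes y th :: real
  assumes "0 < th" "th < 1" "0 \<le> y"
  shows "y powr th \<le> th * y + (1 - th)"
proof (cases "y = 0")
  case True then show ?thesis using assms by simp
next
  case False
  then have "y powr th * 1 powr (1 - th) \<le> th * y + (1 - th) * 1"
    using assms by (intro Youngs_inequality_0) auto
  then show ?thesis by simp
qed

lemma amgm_strict:
  fixes y th :: real
  assumes "0 < th" "th < 1" "0 \<le> y" "y \<noteq> 1"
  shows "y powr th < th * y + (1 - th)"
proof -
  define z where "z = sqrt y"
  have z0: "0 \<le> z" using assms z_def by simp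
  have zz: "z * z = y" using assms z_def by simp
  have z1: "z \<noteq> 1" using assms zz by auto
  have "y powr th = (z powr th) * (z powr th)"
    using zz z0 by (metis powr_mult)
  also have "\<dots> \<le> (th * z + (1 - th)) * (th * z + (1 - th))"
    using amgm_le[OF assms(1,2) z0] z0 assms by (intro mult_mono) auto
  also have "\<dots> = th * y + (1 - th) - th * (1 - th) * (z - 1) * (z - 1)"
    using zz by (simp add: algebra_simps)
  also have "\<dots> < th * y + (1 - th)"
  proof -
    have "(z - 1) * (z - 1) > 0" by (metis eq_iff_diff_eq_0 not_real_square_gt_zero z1)
    then have "th * (1 - th) * ((z - 1) * (z - 1)) > 0" using assms by simp
    then show ?thesis by (simp add: mult.assoc)
  qed
  finally show ?thesis .
qed

lemma powr_subadd:
  fixes x y b :: real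
  assumes "0 < b" "b \<le> 1" "0 \<le> x" "0 \<le> y"
  shows "(x + y) powr b \<le> x powr b + y powr b"
proof (cases "x + y = 0")
  case True then show ?thesis using assms by simp
next
  case False
  then have s: "x + y > 0" using assms by simp
  have hx: "x / (x + y) \<le> (x / (x + y)) powr b"
  proof -
    have "0 \<le> x / (x + y)" "x / (x + y) \<le> 1" using assms s by (auto simp: divide_simps)
    then show ?thesis using assms by (metis powr_one powr_mono')
  qed
  have hy: "y / (x + y) \<le> (y / (x + y)) powr b"
  proof -
    have "0 \<le> y / (x + y)" "y / (x + y) \<le> 1" using assms s by (auto simp: divide_simps)
    then show ?thesis using assms by (metis powr_one powr_mono')
  qed
  have "1 \<le> (x / (x + y)) powr b + (y / (x + y)) powr b"
  proof -
    have "x / (x + y) + y / (x + y) = 1" using s by (simp add: add_divide_distrib[symmetric])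
    then show ?thesis using hx hy by linarith
  qed
  also have "\<dots> = (x powr b + y powr b) / (x + y) powr b"
    using assms by (simp add: powr_divide add_divide_distrib)
  finally show ?thesis using s by (simp add: divide_simps)
qed

lemma powr_conv0:
  fixes u v t b :: real
  assumes "1 \<le> b" "0 \<le> t" "t \<le> 1" "0 \<le> u" "0 \<le> v"
  shows "((1 - t) * u + t * v) powr b \<le> (1 - t) * u powr b + t * v powr b"
proof (cases "u = 0 \<or> v = 0")
  case False
  then show ?thesis using convex_onD[OF powr_convex[OF assms(1)], of t u v] assms by simp
next
  case True
  have k: "c powr b \<le> c" if "0 \<le> c" "c \<le> 1" for c :: real
    using that assms by (metis powr_one powr_mono')
  show ?thesis
  proof (cases "u = 0")
    case True
    have "(t * v) powr b = t powr b * v powr b" using assms by (simp add: powr_mult)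
    also have "\<dots> \<le> t * v powr b" using k[of t] assms by (intro mult_right_mono) auto
    finally show ?thesis using True assms by simp
  next
    case False
    then have "v = 0" using True by simp
    have "((1 - t) * u) powr b = (1 - t) powr b * u powr b" using assms by (simp add: powr_mult)
    also have "\<dots> \<le> (1 - t) * u powr b" using k[of "1 - t"] assms by (intro mult_right_mono) auto
    finally show ?thesis using \<open>v = 0\<close> assms by simp
  qed
qed

lemma powr_conv_ab:
  fixes x y a c b :: real
  assumes "1 \<le> b" "0 < a" "0 < c" "0 \<le> x" "0 \<le> y"
  shows "(x + y) powr b \<le> (a + c) powr (b - 1) * (a powr (1 - b) * x powr b + c powr (1 - b) * y powr b)"
proof -
  define t where "t = c / (a + c)"
  have t: "0 \<le> t" "t \<le> 1" "1 - t = a / (a + c)" using assms by (auto simp: t_def divide_simps)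
  have "x + y = (a + c) * ((1 - t) * (x / a) + t * (y / c))"
    using assms t by (simp add: t_def divide_simps)
  then have "(x + y) powr b = (a + c) powr b * ((1 - t) * (x / a) + t * (y / c)) powr b"
    using assms t by (simp add: powr_mult)
  also have "\<dots> \<le> (a + c) powr b * ((1 - t) * (x / a) powr b + t * (y / c) powr b)"
    using assms t by (intro mult_left_mono powr_conv0) auto
  also have "\<dots> = (a + c) powr (b - 1) * (a powr (1 - b) * x powr b + c powr (1 - b) * y powr b)"
  proof -
    have e1: "(a + c) powr b = (a + c) powr (b - 1) * (a + c)"
      using assms by (simp add: powr_diff)
    have e2: "(x / a) powr b = x powr b / a powr b" using assms by (simp add: powr_divide)
    have e3: "(y / c) powr b = y powr b / c powr b" using assms by (simp add: powr_divide)
    have e4: "a powr (1 - b) = a / a powr b" using assms by (simp add: powr_diff)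
    have e5: "c powr (1 - b) = c / c powr b" using assms by (simp add: powr_diff)
    have g: "(a + c) * P * (a / (a + c) * X + c / (a + c) * Y) = P * (a * X + c * Y)" for P X Y
    proof -
      have r: "(a + c) * P * (u * X + v * Y) = P * (((a + c) * u) * X + ((a + c) * v) * Y)" for u v
        by (simp add: algebra_simps)
      have h1: "(a + c) * (a / (a + c)) = a" "(a + c) * (c / (a + c)) = c" using assms by auto
      show ?thesis using r[of "a / (a + c)" "c / (a + c)"] unfolding h1 .
    qed
    show ?thesis unfolding e1 e2 e3 e4 e5 t(3) unfolding t_def
      using g[of "(a + c) powr (b - 1)" "x powr b / a powr b" "y powr b / c powr b"]
      by (simp add: mult.assoc)
  qed
  finally show ?thesis .
qed

lemma summable_rec:
  fixes a b :: "nat \<Rightarrow> real" and r :: real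
  assumes "\<And>n. 0 \<le> a n" "\<And>n. 0 \<le> b n" "summable b" "0 \<le> r" "r < 1"
    and rec: "\<And>n. a (Suc n) \<le> r * a n + b n"
  shows "summable a"
proof (rule summableI_nonneg_bounded[where x = "(a 0 + suminf b) / (1 - r)"])
  show "0 \<le> a n" for n by fact
  fix n
  have "(\<Sum>i<Suc n. a i) \<le> a 0 + r * (\<Sum>i<n. a i) + (\<Sum>i<n. b i)"
  proof -
    have "(\<Sum>i<Suc n. a i) = a 0 + (\<Sum>i<n. a (Suc i))" by (rule sum.lessThan_Suc_shift)
    also have "\<dots> \<le> a 0 + (\<Sum>i<n. r * a i + b i)" using rec by (intro add_left_mono sum_mono) auto
    finally show ?thesis by (simp add: sum.distrib sum_distrib_left)
  qed
  moreover have "(\<Sum>i<n. a i) \<le> (\<Sum>i<Suc n. a i)" using assms by simp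
  moreover have "(\<Sum>i<n. b i) \<le> suminf b" using assms by (intro sum_le_suminf) auto
  ultimately have "(1 - r) * (\<Sum>i<n. a i) \<le> a 0 + suminf b" by (simp add: algebra_simps)
  then show "(\<Sum>i<n. a i) \<le> (a 0 + suminf b) / (1 - r)" using assms by (simp add: field_simps)
qed

lemma bounded_rec:
  fixes a b :: "nat \<Rightarrow> real"
  assumes "\<And>n. 0 \<le> b n" "summable b"
    and rec: "\<And>n. a (Suc n) \<le> a n + b n"
  shows "a n \<le> a 0 + suminf b"
proof -
  have "a n \<le> a 0 + (\<Sum>i<n. b i)"
  proof (induction n)
    case (Suc n)
    then show ?case using rec[of n] by simp
  qed simp
  also have "(\<Sum>i<n. b i) \<le> suminf b" using assms by (intro sum_le_suminf) auto
  finally show ?thesis by simp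
qed



locale momsp = prob_space M for M :: "'a measure" +
  fixes be :: real assumes be_pos: "0 < be"
begin

definition pp :: real where "pp = max 1 be"
definition mom :: "('a \<Rightarrow> real) \<Rightarrow> ennreal" where
  "mom X = (\<integral>\<^sup>+\<omega>. ennreal (X \<omega> powr be) \<partial>M)"
definition nrm :: "('a \<Rightarrow> real) \<Rightarrow> real" where
  "nrm X = enn2real (mom X) powr (1 / pp)"

lemma pp_pos: "0 < pp" unfolding pp_def by simp

lemma nrm_nonneg: "0 \<le> nrm X" unfolding nrm_def by simp

lemma mom_eq_nrm: assumes "mom X < \<infinity>" shows "mom X = ennreal (nrm X powr pp)"
proof -
  have "nrm X powr pp = enn2real (mom X)"
    unfolding nrm_def using pp_pos by (simp add: powr_powr)
  then show ?thesis using assms by simp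
qed

lemma mom_cong_AE: "AE \<omega> in M. X \<omega> = Y \<omega> \<Longrightarrow> mom X = mom Y"
  unfolding mom_def by (rule nn_integral_cong_AE) auto

lemma nrm_cong_AE: "AE \<omega> in M. X \<omega> = Y \<omega> \<Longrightarrow> nrm X = nrm Y"
  unfolding nrm_def using mom_cong_AE by simp

lemma mom_zero_AE:
  assumes X: "X \<in> borel_measurable M" and nn: "\<And>\<omega>. 0 \<le> X \<omega>" and z: "mom X = 0"
  shows "AE \<omega> in M. X \<omega> = 0"
proof -
  have "AE \<omega> in M. ennreal (X \<omega> powr be) = 0"
    using z unfolding mom_def by (subst nn_integral_0_iff_AE[symmetric]) (use X in auto)
  then show ?thesis by eventually_elim (use nn in auto)
qed

lemma mom_zero: "mom (\<lambda>_. 0) = 0" unfolding mom_def by simp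
lemma nrm_zero: "nrm (\<lambda>_. 0) = 0" unfolding nrm_def mom_zero by simp

lemma nrm_zero_iff:
  assumes "mom X < \<infinity>" shows "nrm X = 0 \<longleftrightarrow> mom X = 0"
  using assms unfolding nrm_def by (auto simp: enn2real_eq_0_iff)

lemma nrm_mult:
  assumes "mom Z = mom X * mom Y" "mom X < \<infinity>" "mom Y < \<infinity>"
  shows "nrm Z = nrm X * nrm Y"
  unfolding nrm_def assms(1) by (simp add: enn2real_mult powr_mult)

lemma mink2:
  assumes X: "X \<in> borel_measurable M" and Y: "Y \<in> borel_measurable M"
    and nX: "\<And>\<omega>. 0 \<le> X \<omega>" and nY: "\<And>\<omega>. 0 \<le> Y \<omega>"
    and fX: "mom X < \<infinity>" and fY: "mom Y < \<infinity>"
  shows "mom (\<lambda>\<omega>. X \<omega> + Y \<omega>) < \<infinity> \<and> nrm (\<lambda>\<omega>. X \<omega> + Y \<omega>) \<le> nrm X + nrm Y"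
proof (cases "be \<le> 1")
  case True
  then have pp1: "pp = 1" unfolding pp_def by simp
  have "mom (\<lambda>\<omega>. X \<omega> + Y \<omega>) \<le> (\<integral>\<^sup>+\<omega>. ennreal (X \<omega> powr be) + ennreal (Y \<omega> powr be) \<partial>M)"
    unfolding mom_def using powr_subadd[OF be_pos True] nX nY
    by (intro nn_integral_mono) (simp add: ennreal_plus[symmetric] del: ennreal_plus)
  also have "\<dots> = mom X + mom Y" unfolding mom_def using X Y by (intro nn_integral_add) auto
  finally have le: "mom (\<lambda>\<omega>. X \<omega> + Y \<omega>) \<le> mom X + mom Y" .
  then have fin: "mom (\<lambda>\<omega>. X \<omega> + Y \<omega>) < \<infinity>" using fX fY
    by (metis ennreal_add_eq_top infinity_ennreal_def le_less_trans less_le top_greatest)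
  have "enn2real (mom (\<lambda>\<omega>. X \<omega> + Y \<omega>)) \<le> enn2real (mom X + mom Y)"
    using le fX fY by (intro enn2real_mono) auto
  also have "\<dots> = enn2real (mom X) + enn2real (mom Y)" using fX fY by (simp add: enn2real_plus)
  finally show ?thesis using fin unfolding nrm_def pp1 by simp
next
  case False
  then have b1: "1 \<le> be" "pp = be" unfolding pp_def by auto
  have conv: "(X \<omega> + Y \<omega>) powr be \<le> (a + c) powr (be - 1) * (a powr (1 - be) * X \<omega> powr be + c powr (1 - be) * Y \<omega> powr be)"
    if "0 < a" "0 < c" for a c \<omega>
    using powr_conv_ab[OF b1(1) that nX nY] .
  have bound: "mom (\<lambda>\<omega>. X \<omega> + Y \<omega>) \<le> ennreal ((a + c) powr (be - 1)) * (ennreal (a powr (1 - be)) * mom X + ennreal (c powr (1 - be)) * mom Y)"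
    if "0 < a" "0 < c" for a c
  proof -
    have "mom (\<lambda>\<omega>. X \<omega> + Y \<omega>) \<le> (\<integral>\<^sup>+\<omega>. ennreal ((a + c) powr (be - 1)) * (ennreal (a powr (1 - be)) * ennreal (X \<omega> powr be) + ennreal (c powr (1 - be)) * ennreal (Y \<omega> powr be)) \<partial>M)"
      unfolding mom_def
      by (intro nn_integral_mono) (use conv[OF that] in \<open>simp add: ennreal_mult[symmetric] ennreal_plus[symmetric] del: ennreal_plus\<close>)
    also have "\<dots> = ennreal ((a + c) powr (be - 1)) * (\<integral>\<^sup>+\<omega>. (ennreal (a powr (1 - be)) * ennreal (X \<omega> powr be) + ennreal (c powr (1 - be)) * ennreal (Y \<omega> powr be)) \<partial>M)"
      using X Y by (intro nn_integral_cmult) auto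
    also have "(\<integral>\<^sup>+\<omega>. (ennreal (a powr (1 - be)) * ennreal (X \<omega> powr be) + ennreal (c powr (1 - be)) * ennreal (Y \<omega> powr be)) \<partial>M)
       = (\<integral>\<^sup>+\<omega>. ennreal (a powr (1 - be)) * ennreal (X \<omega> powr be) \<partial>M) + (\<integral>\<^sup>+\<omega>. ennreal (c powr (1 - be)) * ennreal (Y \<omega> powr be) \<partial>M)"
      using X Y by (intro nn_integral_add) auto
    also have "\<dots> = ennreal (a powr (1 - be)) * mom X + ennreal (c powr (1 - be)) * mom Y"
      unfolding mom_def using X Y by (simp add: nn_integral_cmult)
    finally show ?thesis .
  qed
  have fin: "mom (\<lambda>\<omega>. X \<omega> + Y \<omega>) < \<infinity>"
    using bound[of 1 1] fX fY
    by (metis (no_types, lifting) ennreal_add_eq_top ennreal_mult_eq_top_iff ennreal_neq_top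
        infinity_ennreal_def le_less_trans less_le top_greatest zero_less_one)
  show ?thesis
  proof (cases "nrm X = 0 \<or> nrm Y = 0")
    case True
    then show ?thesis
    proof
      assume "nrm X = 0"
      then have "mom X = 0" using nrm_zero_iff[OF fX] by simp
      then have "AE \<omega> in M. X \<omega> = 0" using mom_zero_AE X nX by blast
      then have "AE \<omega> in M. X \<omega> + Y \<omega> = Y \<omega>" by eventually_elim simp
      then have "nrm (\<lambda>\<omega>. X \<omega> + Y \<omega>) = nrm Y" by (rule nrm_cong_AE)
      then show ?thesis using fin \<open>nrm X = 0\<close> by simp
    next
      assume "nrm Y = 0"
      then have "mom Y = 0" using nrm_zero_iff[OF fY] by simp
      then have "AE \<omega> in M. Y \<omega> = 0" using mom_zero_AE Y nY by blast
      then have "AE \<omega> in M. X \<omega> + Y \<omega> = X \<omega>" by eventually_elim simp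
      then have "nrm (\<lambda>\<omega>. X \<omega> + Y \<omega>) = nrm X" by (rule nrm_cong_AE)
      then show ?thesis using fin \<open>nrm Y = 0\<close> by simp
    qed
  next
    case False
    define a where "a = nrm X"
    define c where "c = nrm Y"
    have ac: "0 < a" "0 < c" using False nrm_nonneg a_def c_def by (auto simp: less_le)
    have mX: "mom X = ennreal (a powr be)" using mom_eq_nrm[OF fX] b1 a_def by simp
    have mY: "mom Y = ennreal (c powr be)" using mom_eq_nrm[OF fY] b1 c_def by simp
    have "mom (\<lambda>\<omega>. X \<omega> + Y \<omega>) \<le> ennreal ((a + c) powr (be - 1) * (a powr (1 - be) * a powr be + c powr (1 - be) * c powr be))"
      using bound[OF ac] unfolding mX mY
      by (simp add: ennreal_mult[symmetric] ennreal_plus[symmetric] del: ennreal_plus)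
    also have "(a + c) powr (be - 1) * (a powr (1 - be) * a powr be + c powr (1 - be) * c powr be) = (a + c) powr be"
    proof -
      have "a powr (1 - be) * a powr be = a" using ac by (simp add: powr_add[symmetric])
      moreover have "c powr (1 - be) * c powr be = c" using ac by (simp add: powr_add[symmetric])
      moreover have "(a + c) powr (be - 1) * (a + c) = (a + c) powr be"
        using ac by (simp add: powr_add[symmetric] powr_diff)
      ultimately show ?thesis by simp
    qed
    finally have "enn2real (mom (\<lambda>\<omega>. X \<omega> + Y \<omega>)) \<le> (a + c) powr be"
      using ac by (simp add: enn2real_leI)
    then have "nrm (\<lambda>\<omega>. X \<omega> + Y \<omega>) \<le> ((a + c) powr be) powr (1 / be)"
      unfolding nrm_def b1(2) using b1 by (intro powr_mono2) auto
    also have "\<dots> = a + c" using ac b1 by (simp add: powr_powr)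
    finally show ?thesis using fin a_def c_def by simp
  qed
qed

lemma mink_sum:
  assumes "finite F"
    and "\<And>m. m \<in> F \<Longrightarrow> X m \<in> borel_measurable M"
    and "\<And>m \<omega>. m \<in> F \<Longrightarrow> 0 \<le> X m \<omega>"
    and "\<And>m. m \<in> F \<Longrightarrow> mom (X m) < \<infinity>"
  shows "mom (\<lambda>\<omega>. \<Sum>m\<in>F. X m \<omega>) < \<infinity> \<and> nrm (\<lambda>\<omega>. \<Sum>m\<in>F. X m \<omega>) \<le> (\<Sum>m\<in>F. nrm (X m))"
  using assms
proof (induction F rule: finite_induct)
  case empty
  then show ?case using mom_zero nrm_zero by simp
next
  case (insert x F)
  have IH: "mom (\<lambda>\<omega>. \<Sum>m\<in>F. X m \<omega>) < \<infinity>" "nrm (\<lambda>\<omega>. \<Sum>m\<in>F. X m \<omega>) \<le> (\<Sum>m\<in>F. nrm (X m))"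
    using insert by auto
  have "mom (\<lambda>\<omega>. X x \<omega> + (\<Sum>m\<in>F. X m \<omega>)) < \<infinity> \<and>
        nrm (\<lambda>\<omega>. X x \<omega> + (\<Sum>m\<in>F. X m \<omega>)) \<le> nrm (X x) + nrm (\<lambda>\<omega>. \<Sum>m\<in>F. X m \<omega>)"
    using insert IH by (intro mink2) (auto intro!: sum_nonneg)
  then show ?case using insert IH by auto
qed


lemma mom_lt1:
  assumes X: "X \<in> borel_measurable M" and nX: "\<And>\<omega>. 0 \<le> X \<omega>"
    and a: "be < a" and one: "(\<integral>\<^sup>+\<omega>. ennreal (X \<omega> powr a) \<partial>M) = 1"
    and n1: "\<not> (AE \<omega> in M. X \<omega> = 1)"
  shows "mom X < 1"
proof -
  define th where "th = be / a"
  have a0: "0 < a" using a be_pos by simp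
  have th: "0 < th" "th < 1" using a be_pos a0 by (auto simp: th_def)
  have pt: "X \<omega> powr be = (X \<omega> powr a) powr th" for \<omega>
    using a0 nX[of \<omega>] by (simp add: powr_powr th_def)
  have le: "X \<omega> powr be \<le> th * X \<omega> powr a + (1 - th)" for \<omega>
    unfolding pt using amgm_le[OF th] by simp
  have lt: "X \<omega> powr be < th * X \<omega> powr a + (1 - th)" if "X \<omega> \<noteq> 1" for \<omega>
  proof -
    have "X \<omega> powr a \<noteq> 1"
    proof
      assume h: "X \<omega> powr a = 1"
      have "(X \<omega> powr a) powr (1 / a) = X \<omega>" using a0 nX[of \<omega>] by (simp add: powr_powr)
      then show False using h that by simp
    qed
    then show ?thesis unfolding pt using amgm_strict[OF th] by simp
  qed
  have intA: "integrable M (\<lambda>\<omega>. X \<omega> powr a)"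
  proof (rule integrableI_nonneg)
    show "(\<lambda>\<omega>. X \<omega> powr a) \<in> borel_measurable M" using X by measurable
    show "AE \<omega> in M. 0 \<le> X \<omega> powr a" by (intro AE_I2) simp
    show "(\<integral>\<^sup>+\<omega>. ennreal (X \<omega> powr a) \<partial>M) < \<infinity>" by (simp add: one)
  qed
  have IA: "integral\<^sup>L M (\<lambda>\<omega>. X \<omega> powr a) = 1"
  proof -
    have "ennreal (integral\<^sup>L M (\<lambda>\<omega>. X \<omega> powr a)) = 1"
      using one nn_integral_eq_integral[OF intA] by simp
    then show ?thesis by simp
  qed
  have intR: "integrable M (\<lambda>\<omega>. th * X \<omega> powr a + (1 - th))"
    using intA by simp
  have intB: "integrable M (\<lambda>\<omega>. X \<omega> powr be)"
  proof (rule Bochner_Integration.integrable_bound[OF intR])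
    show "(\<lambda>\<omega>. X \<omega> powr be) \<in> borel_measurable M" using X by measurable
    have "norm (X \<omega> powr be) \<le> norm (th * X \<omega> powr a + (1 - th))" for \<omega>
    proof -
      have "0 \<le> X \<omega> powr be" by simp
      then show ?thesis using le[of \<omega>] by simp
    qed
    then show "AE \<omega> in M. norm (X \<omega> powr be) \<le> norm (th * X \<omega> powr a + (1 - th))" by simp
  qed
  have "integral\<^sup>L M (\<lambda>\<omega>. X \<omega> powr be) < integral\<^sup>L M (\<lambda>\<omega>. th * X \<omega> powr a + (1 - th))"
  proof (rule integral_less_AE[OF intB intR, where A = "{\<omega>\<in>space M. X \<omega> \<noteq> 1}"])
    show "{\<omega>\<in>space M. X \<omega> \<noteq> 1} \<in> sets M" using X by measurable
    show "emeasure M {\<omega>\<in>space M. X \<omega> \<noteq> 1} \<noteq> 0"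
      using n1 AE_iff_measurable[OF \<open>{\<omega>\<in>space M. X \<omega> \<noteq> 1} \<in> sets M\<close>, of "\<lambda>\<omega>. X \<omega> = 1"] by auto
    show "AE \<omega> in M. \<omega> \<in> {\<omega>\<in>space M. X \<omega> \<noteq> 1} \<longrightarrow> X \<omega> powr be \<noteq> th * X \<omega> powr a + (1 - th)"
      using lt by (intro AE_I2) (metis (mono_tags, lifting) mem_Collect_eq order_less_irrefl)
    show "AE \<omega> in M. X \<omega> powr be \<le> th * X \<omega> powr a + (1 - th)"
      using le by (intro AE_I2) blast
  qed
  also have "\<dots> = 1"
  proof -
    have "integral\<^sup>L M (\<lambda>\<omega>. th * X \<omega> powr a + (1 - th)) = integral\<^sup>L M (\<lambda>\<omega>. th * X \<omega> powr a) + integral\<^sup>L M (\<lambda>\<omega>. 1 - th)"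
      by (rule Bochner_Integration.integral_add) (use intA in simp_all)
    also have "\<dots> = th * 1 + (1 - th)"
      by (simp only: integral_mult_right_zero IA lebesgue_integral_const prob_space) simp
    finally show ?thesis by simp
  qed
  finally have "integral\<^sup>L M (\<lambda>\<omega>. X \<omega> powr be) < 1" .
  moreover have "mom X = ennreal (integral\<^sup>L M (\<lambda>\<omega>. X \<omega> powr be))"
    unfolding mom_def by (intro nn_integral_eq_integral intB AE_I2) simp
  ultimately show ?thesis by (simp add: ennreal_less_iff)
qed

lemma nrm_lt1: assumes "mom X < 1" shows "nrm X < 1"
proof -
  have r: "enn2real (mom X) < 1" using assms
    by (metis enn2real_less_iff ennreal_1 order_less_imp_not_less top.not_eq_extremum)
  have "enn2real (mom X) powr (1 / pp) < 1 powr (1 / pp)"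
  proof (cases "enn2real (mom X) = 0")
    case True then show ?thesis by simp
  next
    case False then show ?thesis using r pp_pos by (intro powr_less_mono2) auto
  qed
  then show ?thesis unfolding nrm_def by simp
qed

end



lemma (in prob_space) indep_var_nn_mult:
  fixes f1 :: "'b \<Rightarrow> ennreal" and f2 :: "'b \<Rightarrow> ennreal" and N1 :: "'b measure" and N2 :: "'b measure"
  assumes iv: "indep_var N1 Y1 N2 Y2" and f1: "f1 \<in> borel_measurable N1" and f2: "f2 \<in> borel_measurable N2"
  shows "(\<integral>\<^sup>+\<omega>. f1 (Y1 \<omega>) * f2 (Y2 \<omega>) \<partial>M) = (\<integral>\<^sup>+\<omega>. f1 (Y1 \<omega>) \<partial>M) * (\<integral>\<^sup>+\<omega>. f2 (Y2 \<omega>) \<partial>M)"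
proof -
  have "indep_var borel (f1 \<circ> Y1) borel (f2 \<circ> Y2)" by (rule indep_var_compose[OF iv f1 f2])
  moreover have cb: "case_bool borel borel = (\<lambda>_::bool. (borel :: ennreal measure))"
    by (rule ext) (simp split: bool.split)
  ultimately have iv2: "indep_vars (\<lambda>_. borel) (case_bool (f1 \<circ> Y1) (f2 \<circ> Y2)) UNIV"
    unfolding indep_var_def by simp
  have "(\<integral>\<^sup>+\<omega>. (\<Prod>b\<in>UNIV. case_bool (f1 \<circ> Y1) (f2 \<circ> Y2) b \<omega>) \<partial>M) = (\<Prod>b\<in>UNIV. \<integral>\<^sup>+\<omega>. case_bool (f1 \<circ> Y1) (f2 \<circ> Y2) b \<omega> \<partial>M)"
    by (rule indep_vars_nn_integral[OF _ iv2]) simp_all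
  then show ?thesis by (simp add: UNIV_bool mult.commute comp_def)
qed

locale L5 = prob_space M for M :: "'a measure" +
  fixes d :: nat and A :: "int \<Rightarrow> 'a \<Rightarrow> nat \<Rightarrow> nat \<Rightarrow> real" and B :: "int \<Rightarrow> 'a \<Rightarrow> nat \<Rightarrow> real"
    and \<alpha> :: "nat \<Rightarrow> real" and i j0 :: nat
  assumes iid: "iid_AB M d A B" and cT: "condT M d A B \<alpha>"
    and i_in: "i \<in> {1..d}" and j0_in: "j0 \<in> {1..d}"
    and lt: "trilt M d A i j0"
    and eqa: "alpha_tilde M d A \<alpha> i = \<alpha> j0"
begin

definition X :: "int \<Rightarrow> 'a \<Rightarrow> ((nat \<times> nat) + nat) \<Rightarrow> real" where "X = AB_vec d A B"
definition gg :: "nat \<Rightarrow> nat \<Rightarrow> (((nat \<times> nat) + nat) \<Rightarrow> real) \<Rightarrow> real" where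
  "gg k l v = (if prec_rel M d A k l then max 0 (v (Inl (k, l))) else 0)"
definition C :: "int \<Rightarrow> 'a \<Rightarrow> nat \<Rightarrow> nat \<Rightarrow> real" where "C t \<omega> k l = gg k l (X t \<omega>)"
definition Pi :: "nat \<Rightarrow> 'a \<Rightarrow> nat \<Rightarrow> real" where "Pi s \<omega> l = pi_prod d C s \<omega> i l"
definition S :: "nat set" where "S = {l. trile M d A i l}"

lemma indepX: "indep_vars (\<lambda>_. AB_space d) X UNIV"
  using iid unfolding iid_AB_def X_def by blast

lemma distX: "distr M (AB_space d) (X t) = distr M (AB_space d) (X 0)"
  using iid unfolding iid_AB_def X_def by blast

lemma X_meas[measurable]: "X t \<in> measurable M (AB_space d)"
  using indepX unfolding indep_vars_def by blast

lemma X_A: "k \<in> {1..d} \<Longrightarrow> l \<in> {1..d} \<Longrightarrow> X t \<omega> (Inl (k, l)) = A t \<omega> k l"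
  unfolding X_def AB_vec_def coord_idx_def by auto

lemma A_meas[measurable]: assumes "k \<in> {1..d}" "l \<in> {1..d}" shows "(\<lambda>\<omega>. A t \<omega> k l) \<in> borel_measurable M"
proof -
  have "(\<lambda>\<omega>. X t \<omega> (Inl (k, l))) \<in> borel_measurable M"
    using assms unfolding AB_space_def coord_idx_def
    by (intro measurable_compose[OF X_meas[unfolded AB_space_def coord_idx_def]] measurable_component_singleton) auto
  then show ?thesis using X_A[OF assms] by simp
qed

lemma prec_in: "prec_rel M d A k l \<Longrightarrow> k \<in> {1..d} \<and> l \<in> {1..d}"
  unfolding prec_rel_def by blast

lemma gg_meas[measurable]: "gg k l \<in> borel_measurable (AB_space d)"
proof (cases "prec_rel M d A k l")
  case True
  then have "Inl (k, l) \<in> coord_idx d" using prec_in unfolding coord_idx_def by auto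
  then have "(\<lambda>v. v (Inl (k, l))) \<in> borel_measurable (AB_space d)"
    unfolding AB_space_def by (rule measurable_component_singleton)
  then show ?thesis unfolding gg_def using True by simp
next
  case False then show ?thesis unfolding gg_def by simp
qed

lemma C_meas[measurable]: "(\<lambda>\<omega>. C t \<omega> k l) \<in> borel_measurable M"
  unfolding C_def by (rule measurable_compose[OF X_meas gg_meas])

lemma C_nonneg: "0 \<le> C t \<omega> k l" unfolding C_def gg_def by auto

lemma C_notprec: "\<not> prec_rel M d A k l \<Longrightarrow> C t \<omega> k l = 0" unfolding C_def gg_def by auto

lemma C_prec: "prec_rel M d A k l \<Longrightarrow> C t \<omega> k l = max 0 (A t \<omega> k l)"
  unfolding C_def gg_def using prec_in X_A by auto


lemma T1: "AE \<omega> in M. (\<forall>k\<in>{1..d}. \<forall>l\<in>{1..d}. A 0 \<omega> k l \<ge> 0)"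
  using cT unfolding condT_def by (auto elim: AE_mp)
lemma T3: "k \<in> {1..d} \<Longrightarrow> l \<in> {1..d} \<Longrightarrow> k > l \<Longrightarrow> measure M {\<omega>\<in>space M. A 0 \<omega> k l = 0} = 1"
  using cT unfolding condT_def by blast
lemma T4a: "l \<in> {1..d} \<Longrightarrow> \<alpha> l > 0"
  using cT unfolding condT_def by blast
lemma T4b: "inj_on \<alpha> {1..d}"
  using cT unfolding condT_def by blast
lemma T4c: "l \<in> {1..d} \<Longrightarrow> (\<integral>\<^sup>+\<omega>. ennreal (A 0 \<omega> l l powr \<alpha> l) \<partial>M) = 1"
  using cT unfolding condT_def by blast
lemma T5: "k \<in> {1..d} \<Longrightarrow> l \<in> {1..d} \<Longrightarrow> (\<integral>\<^sup>+\<omega>. ennreal (A 0 \<omega> k l powr \<alpha> k) \<partial>M) < \<infinity>"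
  using cT unfolding condT_def by blast
lemma T8: "l \<in> {1..d} \<Longrightarrow> nonarith_log M (\<lambda>\<omega>. A 0 \<omega> l l)"
  using cT unfolding condT_def by blast

lemma not_prec_AE:
  assumes k: "k \<in> {1..d}" and l: "l \<in> {1..d}" and np: "\<not> prec_rel M d A k l"
  shows "AE \<omega> in M. A 0 \<omega> k l \<le> 0"
proof -
  have m: "measure M {\<omega>\<in>space M. A 0 \<omega> k l > 0} = 0"
    using np k l unfolding prec_rel_def by (simp add: zero_less_measure_iff)
  have set: "{\<omega>\<in>space M. A 0 \<omega> k l > 0} \<in> sets M" using A_meas[OF k l] by measurable
  have e: "emeasure M {\<omega>\<in>space M. A 0 \<omega> k l > 0} = 0" using m by (simp add: emeasure_eq_measure)
  have q: "{\<omega>\<in>space M. \<not> A 0 \<omega> k l \<le> 0} = {\<omega>\<in>space M. A 0 \<omega> k l > 0}" by auto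
  show ?thesis using AE_iff_measurable[OF set q] e by simp
qed

lemma AE_C0: "AE \<omega> in M. \<forall>k\<in>{1..d}. \<forall>l\<in>{1..d}. A 0 \<omega> k l = C 0 \<omega> k l"
proof -
  have np: "AE \<omega> in M. \<forall>k\<in>{1..d}. \<forall>l\<in>{1..d}. \<not> prec_rel M d A k l \<longrightarrow> A 0 \<omega> k l \<le> 0"
  proof (intro AE_finite_allI)
    fix k l assume kl: "k \<in> {1..d}" "l \<in> {1..d}"
    show "AE \<omega> in M. \<not> prec_rel M d A k l \<longrightarrow> A 0 \<omega> k l \<le> 0"
    proof (cases "prec_rel M d A k l")
      case True then show ?thesis by simp
    next
      case False then show ?thesis using not_prec_AE[OF kl False] by simp
    qed
  qed simp_all
  from np T1 show ?thesis
  proof eventually_elim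
    case (elim \<omega>)
    show ?case
    proof (intro ballI)
      fix k l assume kl: "k \<in> {1..d}" "l \<in> {1..d}"
      show "A 0 \<omega> k l = C 0 \<omega> k l"
      proof (cases "prec_rel M d A k l")
        case True
        have "A 0 \<omega> k l \<ge> 0" using elim kl by blast
        then show ?thesis by (simp add: C_prec[OF True])
      next
        case False
        have "A 0 \<omega> k l \<ge> 0" "A 0 \<omega> k l \<le> 0" using elim kl False by blast+
        then show ?thesis by (simp add: C_notprec[OF False])
      qed
    qed
  qed
qed

lemma comp_meas: "k \<in> {1..d} \<Longrightarrow> l \<in> {1..d} \<Longrightarrow> (\<lambda>v. v (Inl (k, l))) \<in> borel_measurable (AB_space d)"
  unfolding AB_space_def by (rule measurable_component_singleton) (auto simp: coord_idx_def)

lemma AE_C: "AE \<omega> in M. \<forall>k\<in>{1..d}. \<forall>l\<in>{1..d}. A t \<omega> k l = C t \<omega> k l"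
proof (intro AE_finite_allI)
  fix k l assume kl: "k \<in> {1..d}" "l \<in> {1..d}"
  have set: "{v \<in> space (AB_space d). v (Inl (k, l)) = gg k l v} \<in> sets (AB_space d)"
    using comp_meas[OF kl] gg_meas by (rule measurable_equality_set)
  have "AE \<omega> in M. X 0 \<omega> (Inl (k, l)) = gg k l (X 0 \<omega>)"
    using AE_C0 by eventually_elim (use kl X_A in \<open>auto simp: C_def\<close>)
  then have "AE v in distr M (AB_space d) (X 0). v (Inl (k, l)) = gg k l v"
    by (subst AE_distr_iff[OF X_meas set])
  then have "AE v in distr M (AB_space d) (X t). v (Inl (k, l)) = gg k l v"
    by (simp only: distX[of t])
  then have "AE \<omega> in M. X t \<omega> (Inl (k, l)) = gg k l (X t \<omega>)"
    by (subst (asm) AE_distr_iff[OF X_meas set])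
  then show "AE \<omega> in M. A t \<omega> k l = C t \<omega> k l"
    by eventually_elim (use kl X_A in \<open>auto simp: C_def\<close>)
qed simp_all

lemma prec_le: assumes "prec_rel M d A k l" shows "k \<le> l"
proof (rule ccontr)
  assume "\<not> k \<le> l"
  have kl: "k \<in> {1..d}" "l \<in> {1..d}" using prec_in[OF assms] by auto
  have e1: "{\<omega>\<in>space M. A 0 \<omega> k l = 0} \<in> events" using kl by measurable
  have "measure M {\<omega>\<in>space M. A 0 \<omega> k l > 0} \<le> measure M (space M - {\<omega>\<in>space M. A 0 \<omega> k l = 0})"
    by (rule finite_measure_mono) (use e1 in auto)
  also have "\<dots> = 1 - 1" using prob_compl[OF e1] T3[OF kl] \<open>\<not> k \<le> l\<close> by simp
  finally show False using assms unfolding prec_rel_def by simp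
qed

lemma C_lower: "l < k \<Longrightarrow> C t \<omega> k l = 0"
  using prec_le C_notprec by (meson not_le)

lemma S_sub: "S \<subseteq> {1..d}"
proof
  fix l assume "l \<in> S"
  then have "(prec_rel M d A)\<^sup>*\<^sup>* i l" unfolding S_def trile_def by simp
  then show "l \<in> {1..d}"
    by (induction rule: rtranclp_induct) (use i_in prec_in in auto)
qed

lemma S_fin: "finite S" using S_sub finite_subset by blast

lemma i_S: "i \<in> S" unfolding S_def trile_def by simp
lemma j0_S: "j0 \<in> S" using lt unfolding S_def trilt_def by simp
lemma i_ne_j0: "i \<noteq> j0" using lt unfolding trilt_def by simp

lemma S_step: "k \<in> S \<Longrightarrow> prec_rel M d A k l \<Longrightarrow> l \<in> S"
  unfolding S_def trile_def by (simp add: rtranclp.rtrancl_into_rtrancl)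

lemma Pi_0: "Pi 0 \<omega> l = (if i = l then 1 else 0)" unfolding Pi_def by simp

lemma Pi_Suc: "Pi (Suc s) \<omega> l = (\<Sum>k\<in>{1..d}. Pi s \<omega> k * C (- int s) \<omega> k l)"
  unfolding Pi_def by simp

lemma Pi_nonneg: "0 \<le> Pi s \<omega> l"
  by (induction s arbitrary: l) (auto simp: Pi_0 Pi_Suc C_nonneg intro!: sum_nonneg)

lemma Pi_notS: "l \<notin> S \<Longrightarrow> Pi s \<omega> l = 0"
proof (induction s arbitrary: l)
  case 0 then show ?case using i_S by (auto simp: Pi_0)
next
  case (Suc s)
  have "Pi s \<omega> k * C (- int s) \<omega> k l = 0" for k
  proof (cases "k \<in> S")
    case True
    then have "\<not> prec_rel M d A k l" using S_step Suc.prems by blast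
    then show ?thesis using C_notprec by simp
  next
    case False then show ?thesis using Suc.IH by simp
  qed
  then show ?case unfolding Pi_Suc by (intro sum.neutral) simp
qed

lemma Pi_rec: "Pi (Suc s) \<omega> l = (\<Sum>k\<in>S. Pi s \<omega> k * C (- int s) \<omega> k l)"
  unfolding Pi_Suc using S_sub by (intro sum.mono_neutral_right) (auto simp: Pi_notS)

lemma Pi_meas[measurable]: "(\<lambda>\<omega>. Pi s \<omega> l) \<in> borel_measurable M"
  by (induction s arbitrary: l) (auto simp: Pi_0 Pi_Suc)

lemma Pi_ge: "k \<in> {1..d} \<Longrightarrow> Pi s \<omega> k * C (- int s) \<omega> k l \<le> Pi (Suc s) \<omega> l"
  unfolding Pi_Suc
  by (rule member_le_sum[where f = "\<lambda>k. Pi s \<omega> k * C (- int s) \<omega> k l"]) (auto simp: Pi_nonneg C_nonneg)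

lemma AE_Pi: "AE \<omega> in M. \<forall>l\<in>{1..d}. pi_prod d A s \<omega> i l = Pi s \<omega> l"
proof (induction s)
  case 0 then show ?case by (simp add: Pi_0)
next
  case (Suc s)
  from Suc AE_C[of "- int s"] show ?case
  proof eventually_elim
    case (elim \<omega>)
    show ?case
    proof
      fix l assume l: "l \<in> {1..d}"
      have "pi_prod d A (Suc s) \<omega> i l = (\<Sum>k\<in>{1..d}. pi_prod d A s \<omega> i k * A (- int s) \<omega> k l)" by simp
      also have "\<dots> = (\<Sum>k\<in>{1..d}. Pi s \<omega> k * C (- int s) \<omega> k l)"
        using elim l by (intro sum.cong) auto
      finally show "pi_prod d A (Suc s) \<omega> i l = Pi (Suc s) \<omega> l" by (simp add: Pi_Suc)
    qed
  qed
qed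


definition Ts :: "nat \<Rightarrow> int set" where "Ts s = {t. - int s < t \<and> t \<le> 0}"
definition GG :: "nat \<Rightarrow> (int \<Rightarrow> ((nat \<times> nat) + nat) \<Rightarrow> real) \<Rightarrow> nat \<Rightarrow> real" where
  "GG s Y l = pi_prod d (\<lambda>t (_::'a) k l. gg k l (Y t)) s (undefined::'a) i l"

lemma pi_prod_dep:
  "(\<And>t. - int s < t \<Longrightarrow> t \<le> 0 \<Longrightarrow> A1 t \<omega>1 = A2 t \<omega>2) \<Longrightarrow> pi_prod d A1 s \<omega>1 a b = pi_prod d A2 s \<omega>2 a b"
proof (induction s arbitrary: b)
  case 0 then show ?case by simp
next
  case (Suc s)
  have IH: "pi_prod d A1 s \<omega>1 a k = pi_prod d A2 s \<omega>2 a k" for k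
    using Suc.prems by (intro Suc.IH) auto
  have "A1 (- int s) \<omega>1 = A2 (- int s) \<omega>2" using Suc.prems by simp
  then show ?case using IH by simp
qed

lemma GG_Suc: "GG (Suc s) Y l = (\<Sum>k\<in>{1..d}. GG s Y k * gg k l (Y (- int s)))"
  unfolding GG_def by simp

lemma GG_meas: "Ts s \<subseteq> T \<Longrightarrow> (\<lambda>Y. GG s Y l) \<in> borel_measurable (PiM T (\<lambda>_. AB_space d))"
proof (induction s arbitrary: l)
  case 0 then show ?case unfolding GG_def by simp
next
  case (Suc s)
  have sub: "Ts s \<subseteq> T" using Suc.prems unfolding Ts_def by auto
  have mem: "- int s \<in> T" using Suc.prems unfolding Ts_def by auto
  have c: "(\<lambda>Y. Y (- int s)) \<in> measurable (PiM T (\<lambda>_. AB_space d)) (AB_space d)"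
    using mem by (rule measurable_component_singleton)
  have g: "(\<lambda>Y. gg k l (Y (- int s))) \<in> borel_measurable (PiM T (\<lambda>_. AB_space d))" for k
    by (rule measurable_compose[OF c gg_meas])
  show ?case unfolding GG_Suc
    using Suc.IH[OF sub] g by (intro borel_measurable_sum borel_measurable_times) auto
qed

lemma Pi_GG: "Pi s \<omega> l = GG s (restrict (\<lambda>t. X t \<omega>) (Ts s)) l"
  unfolding Pi_def GG_def
  by (rule pi_prod_dep) (auto simp: Ts_def C_def fun_eq_iff)

lemma C_restr: "C (- int s) \<omega> k l = gg k l (restrict (\<lambda>t. X t \<omega>) {- int s} (- int s))"
  unfolding C_def by simp

lemma mom_prod_gen:
  fixes be :: real
  shows "(\<integral>\<^sup>+\<omega>. ennreal ((Pi s \<omega> m * C (- int s) \<omega> k l) powr be) \<partial>M)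
       = (\<integral>\<^sup>+\<omega>. ennreal (Pi s \<omega> m powr be) \<partial>M) * (\<integral>\<^sup>+\<omega>. ennreal (C (- int s) \<omega> k l powr be) \<partial>M)"
proof -
  have iv: "indep_var (PiM (Ts s) (\<lambda>_. AB_space d)) (\<lambda>\<omega>. restrict (\<lambda>t. X t \<omega>) (Ts s))
                      (PiM {- int s} (\<lambda>_. AB_space d)) (\<lambda>\<omega>. restrict (\<lambda>t. X t \<omega>) {- int s})"
    by (rule indep_var_restrict[OF indepX]) (auto simp: Ts_def)
  have m1[measurable]: "(\<lambda>Y. GG s Y m) \<in> borel_measurable (PiM (Ts s) (\<lambda>_. AB_space d))"
    by (rule GG_meas) simp
  have c: "(\<lambda>Y. Y (- int s)) \<in> measurable (PiM {- int s} (\<lambda>_. AB_space d)) (AB_space d)"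
    by (rule measurable_component_singleton) simp
  have m2[measurable]: "(\<lambda>Y. gg k l (Y (- int s))) \<in> borel_measurable (PiM {- int s} (\<lambda>_. AB_space d))"
    by (rule measurable_compose[OF c gg_meas])
  have f1: "(\<lambda>Y. ennreal (GG s Y m powr be)) \<in> borel_measurable (PiM (Ts s) (\<lambda>_. AB_space d))"
    by measurable
  have f2: "(\<lambda>Y. ennreal (gg k l (Y (- int s)) powr be)) \<in> borel_measurable (PiM {- int s} (\<lambda>_. AB_space d))"
    by measurable
  have "(\<integral>\<^sup>+\<omega>. ennreal ((Pi s \<omega> m * C (- int s) \<omega> k l) powr be) \<partial>M)
      = (\<integral>\<^sup>+\<omega>. ennreal (GG s (restrict (\<lambda>t. X t \<omega>) (Ts s)) m powr be) * ennreal (gg k l (restrict (\<lambda>t. X t \<omega>) {- int s} (- int s)) powr be) \<partial>M)"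
  proof (rule nn_integral_cong)
    fix \<omega>
    have pe: "(Pi s \<omega> m * C (- int s) \<omega> k l) powr be = Pi s \<omega> m powr be * C (- int s) \<omega> k l powr be"
      using Pi_nonneg C_nonneg by (simp add: powr_mult)
    have e1: "GG s (restrict (\<lambda>t. X t \<omega>) (Ts s)) m = Pi s \<omega> m" by (simp add: Pi_GG)
    have e2: "gg k l (restrict (\<lambda>t. X t \<omega>) {- int s} (- int s)) = C (- int s) \<omega> k l" by (simp add: C_def)
    have "ennreal ((Pi s \<omega> m * C (- int s) \<omega> k l) powr be) = ennreal (Pi s \<omega> m powr be * C (- int s) \<omega> k l powr be)"
      by (simp only: pe)
    also have "\<dots> = ennreal (Pi s \<omega> m powr be) * ennreal (C (- int s) \<omega> k l powr be)"
      by (rule ennreal_mult) simp_all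
    finally show "ennreal ((Pi s \<omega> m * C (- int s) \<omega> k l) powr be) = ennreal (GG s (restrict (\<lambda>t. X t \<omega>) (Ts s)) m powr be) * ennreal (gg k l (restrict (\<lambda>t. X t \<omega>) {- int s} (- int s)) powr be)"
      unfolding e1 e2 .
  qed
  also have "\<dots> = (\<integral>\<^sup>+\<omega>. ennreal (GG s (restrict (\<lambda>t. X t \<omega>) (Ts s)) m powr be) \<partial>M) * (\<integral>\<^sup>+\<omega>. ennreal (gg k l (restrict (\<lambda>t. X t \<omega>) {- int s} (- int s)) powr be) \<partial>M)"
    by (rule indep_var_nn_mult[OF iv f1 f2])
  also have "\<dots> = (\<integral>\<^sup>+\<omega>. ennreal (Pi s \<omega> m powr be) \<partial>M) * (\<integral>\<^sup>+\<omega>. ennreal (C (- int s) \<omega> k l powr be) \<partial>M)"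
    by (simp add: Pi_GG C_def)
  finally show ?thesis .
qed

lemma C_ident:
  fixes be :: real
  shows "(\<integral>\<^sup>+\<omega>. ennreal (C t \<omega> k l powr be) \<partial>M) = (\<integral>\<^sup>+\<omega>. ennreal (C 0 \<omega> k l powr be) \<partial>M)"
proof -
  have f[measurable]: "(\<lambda>v. ennreal (gg k l v powr be)) \<in> borel_measurable (AB_space d)" by measurable
  have "(\<integral>\<^sup>+\<omega>. ennreal (C t \<omega> k l powr be) \<partial>M) = integral\<^sup>N (distr M (AB_space d) (X t)) (\<lambda>v. ennreal (gg k l v powr be))"
    unfolding C_def by (rule nn_integral_distr[symmetric]) (simp_all add: f)
  also have "\<dots> = integral\<^sup>N (distr M (AB_space d) (X 0)) (\<lambda>v. ennreal (gg k l v powr be))"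
    by (simp only: distX[of t])
  also have "\<dots> = (\<integral>\<^sup>+\<omega>. ennreal (C 0 \<omega> k l powr be) \<partial>M)"
    unfolding C_def by (rule nn_integral_distr) (simp_all add: f)
  finally show ?thesis .
qed

lemma C0_A:
  fixes be :: real
  assumes "k \<in> {1..d}" "l \<in> {1..d}"
  shows "(\<integral>\<^sup>+\<omega>. ennreal (C 0 \<omega> k l powr be) \<partial>M) = (\<integral>\<^sup>+\<omega>. ennreal (A 0 \<omega> k l powr be) \<partial>M)"
  by (rule nn_integral_cong_AE) (use AE_C0 assms in \<open>auto elim!: AE_mp\<close>)


sublocale momsp M "\<alpha> j0" by unfold_locales (rule T4a[OF j0_in])

definition xs :: "nat \<Rightarrow> nat \<Rightarrow> real" where "xs l s = nrm (\<lambda>\<omega>. Pi s \<omega> l)"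
definition cc :: "nat \<Rightarrow> nat \<Rightarrow> real" where "cc k l = nrm (\<lambda>\<omega>. C 0 \<omega> k l)"

lemma be_pos': "0 < \<alpha> j0" by (rule T4a[OF j0_in])

lemma mom_Cprod: "mom (\<lambda>\<omega>. Pi s \<omega> m * C (- int s) \<omega> k l) = mom (\<lambda>\<omega>. Pi s \<omega> m) * mom (\<lambda>\<omega>. C 0 \<omega> k l)"
  by (simp only: mom_def mom_prod_gen C_ident[of "- int s" k l "\<alpha> j0"])

lemma mom_C0A: "k \<in> {1..d} \<Longrightarrow> l \<in> {1..d} \<Longrightarrow> mom (\<lambda>\<omega>. C 0 \<omega> k l) = (\<integral>\<^sup>+\<omega>. ennreal (A 0 \<omega> k l powr \<alpha> j0) \<partial>M)"
  unfolding mom_def by (rule C0_A)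

lemma minS: assumes "m \<in> S" shows "\<alpha> j0 \<le> \<alpha> m"
proof -
  have fin: "finite {\<alpha> j |j. j \<in> {1..d} \<and> trile M d A i j}"
  proof -
    have "{\<alpha> j |j. j \<in> {1..d} \<and> trile M d A i j} \<subseteq> \<alpha> ` {1..d}" by auto
    then show ?thesis using finite_subset by blast
  qed
  have m1: "m \<in> {1..d}" using assms S_sub by auto
  have m2: "trile M d A i m" using assms unfolding S_def by simp
  have "\<alpha> m \<in> {\<alpha> j |j. j \<in> {1..d} \<and> trile M d A i j}" using m1 m2 by blast
  then have "Min {\<alpha> j |j. j \<in> {1..d} \<and> trile M d A i j} \<le> \<alpha> m" using fin by (rule Min_le[rotated])
  then show ?thesis using eqa unfolding alpha_tilde_def by simp
qed

lemma C_fin: assumes "m \<in> S" shows "mom (\<lambda>\<omega>. C 0 \<omega> m l) < \<infinity>"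
proof (cases "prec_rel M d A m l")
  case False
  then have "(\<lambda>\<omega>. C 0 \<omega> m l) = (\<lambda>_. 0)" using C_notprec by auto
  then show ?thesis using mom_zero by simp
next
  case True
  have ml: "m \<in> {1..d}" "l \<in> {1..d}" using prec_in[OF True] by auto
  have le: "\<alpha> j0 \<le> \<alpha> m" by (rule minS[OF assms])
  have pt: "C 0 \<omega> m l powr \<alpha> j0 \<le> 1 + C 0 \<omega> m l powr \<alpha> m" for \<omega>
  proof (cases "C 0 \<omega> m l \<le> 1")
    case True
    have "C 0 \<omega> m l powr \<alpha> j0 \<le> 1 powr \<alpha> j0"
      using True C_nonneg be_pos' by (intro powr_mono2) auto
    moreover have "0 \<le> C 0 \<omega> m l powr \<alpha> m" by simp
    moreover have "1 powr \<alpha> j0 = (1::real)" by simp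
    ultimately show ?thesis by linarith
  next
    case False
    then have "C 0 \<omega> m l powr \<alpha> j0 \<le> C 0 \<omega> m l powr \<alpha> m" using le by (intro powr_mono) auto
    then show ?thesis by simp
  qed
  have "mom (\<lambda>\<omega>. C 0 \<omega> m l) \<le> (\<integral>\<^sup>+\<omega>. 1 + ennreal (C 0 \<omega> m l powr \<alpha> m) \<partial>M)"
    unfolding mom_def
  proof (intro nn_integral_mono)
    fix \<omega>
    have "ennreal (C 0 \<omega> m l powr \<alpha> j0) \<le> ennreal (1 + C 0 \<omega> m l powr \<alpha> m)"
      by (rule ennreal_leI) (rule pt)
    also have "\<dots> = 1 + ennreal (C 0 \<omega> m l powr \<alpha> m)" by (subst ennreal_plus) auto
    finally show "ennreal (C 0 \<omega> m l powr \<alpha> j0) \<le> 1 + ennreal (C 0 \<omega> m l powr \<alpha> m)" .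
  qed
  also have "\<dots> = (\<integral>\<^sup>+\<omega>. 1 \<partial>M) + (\<integral>\<^sup>+\<omega>. ennreal (C 0 \<omega> m l powr \<alpha> m) \<partial>M)"
    by (rule nn_integral_add) auto
  also have "(\<integral>\<^sup>+\<omega>. ennreal (C 0 \<omega> m l powr \<alpha> m) \<partial>M) = (\<integral>\<^sup>+\<omega>. ennreal (A 0 \<omega> m l powr \<alpha> m) \<partial>M)"
    by (rule C0_A[OF ml])
  also have "(\<integral>\<^sup>+\<omega>. 1 \<partial>M) = 1" by (simp add: emeasure_space_1)
  finally have le1: "mom (\<lambda>\<omega>. C 0 \<omega> m l) \<le> 1 + (\<integral>\<^sup>+\<omega>. ennreal (A 0 \<omega> m l powr \<alpha> m) \<partial>M)" .
  have "1 + (\<integral>\<^sup>+\<omega>. ennreal (A 0 \<omega> m l powr \<alpha> m) \<partial>M) < \<infinity>" using T5[OF ml] by simp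
  then show ?thesis using le1 by (rule le_less_trans[rotated])
qed

lemma Pi_notS_fun: "l \<notin> S \<Longrightarrow> (\<lambda>\<omega>. Pi s \<omega> l) = (\<lambda>_. 0)"
  using Pi_notS by auto

lemma Pi_fin: "mom (\<lambda>\<omega>. Pi s \<omega> l) < \<infinity>"
proof (induction s arbitrary: l)
  case 0
  have "mom (\<lambda>\<omega>. Pi 0 \<omega> l) \<le> (\<integral>\<^sup>+\<omega>. 1 \<partial>M)"
    unfolding mom_def by (intro nn_integral_mono) (simp add: Pi_0)
  also have "\<dots> = 1" by (simp add: emeasure_space_1)
  finally have "mom (\<lambda>\<omega>. Pi 0 \<omega> l) \<le> 1" .
  then show ?case unfolding infinity_ennreal_def using ennreal_one_less_top by (rule le_less_trans)
next
  case (Suc s)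
  show ?case
  proof (cases "l \<in> S")
    case False then show ?thesis using Pi_notS_fun mom_zero by simp
  next
    case True
    have "mom (\<lambda>\<omega>. \<Sum>k\<in>S. Pi s \<omega> k * C (- int s) \<omega> k l) < \<infinity>"
    proof -
      have "mom (\<lambda>\<omega>. Pi s \<omega> k * C (- int s) \<omega> k l) < \<infinity>" if "k \<in> S" for k
        unfolding mom_Cprod using Suc.IH[of k] C_fin[OF that, of l] by (simp add: ennreal_mult_less_top)
      then show ?thesis
        using mink_sum[OF S_fin, of "\<lambda>k \<omega>. Pi s \<omega> k * C (- int s) \<omega> k l"]
        by (auto simp: Pi_nonneg C_nonneg)
    qed
    then show ?thesis by (simp add: Pi_rec)
  qed
qed

lemma rec_ineq: "xs l (Suc s) \<le> (\<Sum>k\<in>S. xs k s * cc k l)"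
proof -
  have fins: "mom (\<lambda>\<omega>. Pi s \<omega> k * C (- int s) \<omega> k l) < \<infinity>" if "k \<in> S" for k
    unfolding mom_Cprod using Pi_fin[of s k] C_fin[OF that, of l] by (simp add: ennreal_mult_less_top)
  have "xs l (Suc s) = nrm (\<lambda>\<omega>. \<Sum>k\<in>S. Pi s \<omega> k * C (- int s) \<omega> k l)"
    unfolding xs_def by (simp add: Pi_rec)
  also have "\<dots> \<le> (\<Sum>k\<in>S. nrm (\<lambda>\<omega>. Pi s \<omega> k * C (- int s) \<omega> k l))"
    using mink_sum[OF S_fin, of "\<lambda>k \<omega>. Pi s \<omega> k * C (- int s) \<omega> k l"] fins
    by (auto simp: Pi_nonneg C_nonneg)
  also have "\<dots> = (\<Sum>k\<in>S. xs k s * cc k l)"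
  proof (rule sum.cong)
    fix k assume k: "k \<in> S"
    show "nrm (\<lambda>\<omega>. Pi s \<omega> k * C (- int s) \<omega> k l) = xs k s * cc k l"
      unfolding xs_def cc_def by (rule nrm_mult[OF mom_Cprod Pi_fin C_fin[OF k]])
  qed simp
  finally show ?thesis .
qed

lemma xs_nonneg: "0 \<le> xs l s" unfolding xs_def by (rule nrm_nonneg)
lemma cc_nonneg: "0 \<le> cc k l" unfolding cc_def by (rule nrm_nonneg)

lemma cc_lower: "l < k \<Longrightarrow> cc k l = 0"
proof -
  assume "l < k"
  then have "(\<lambda>\<omega>. C 0 \<omega> k l) = (\<lambda>_. 0)" using C_lower by auto
  then show ?thesis unfolding cc_def using nrm_zero by simp
qed

lemma xs_notS: "l \<notin> S \<Longrightarrow> xs l s = 0"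
  unfolding xs_def using Pi_notS_fun nrm_zero by simp

lemma cc_j0: "cc j0 j0 = 1"
  unfolding cc_def nrm_def using mom_C0A[OF j0_in j0_in] T4c[OF j0_in] by simp

lemma cc_lt1: assumes l: "l \<in> S" "l \<noteq> j0" shows "cc l l < 1"
proof -
  have ld: "l \<in> {1..d}" using l S_sub by auto
  have "\<alpha> j0 \<le> \<alpha> l" by (rule minS[OF l(1)])
  moreover have "\<alpha> l \<noteq> \<alpha> j0" using T4b ld j0_in l(2) by (meson inj_on_contraD)
  ultimately have lt: "\<alpha> j0 < \<alpha> l" by simp
  have one: "(\<integral>\<^sup>+\<omega>. ennreal (C 0 \<omega> l l powr \<alpha> l) \<partial>M) = 1"
    using C0_A[OF ld ld] T4c[OF ld] by simp
  have n1: "\<not> (AE \<omega> in M. C 0 \<omega> l l = 1)"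
  proof
    assume "AE \<omega> in M. C 0 \<omega> l l = 1"
    with AE_C0 have "AE \<omega> in M. A 0 \<omega> l l > 0 \<longrightarrow> ln (A 0 \<omega> l l) \<in> {1 * real_of_int k |k. True}"
    proof eventually_elim
      case (elim \<omega>)
      then have "A 0 \<omega> l l = 1" using ld by auto
      then show ?case by (auto intro: exI[of _ 0])
    qed
    then show False using T8[OF ld] unfolding nonarith_log_def by (meson zero_less_one)
  qed
  have "mom (\<lambda>\<omega>. C 0 \<omega> l l) < 1"
    by (rule mom_lt1[OF C_meas _ lt one n1]) (rule C_nonneg)
  then show ?thesis unfolding cc_def by (rule nrm_lt1)
qed

lemma decomp: assumes "l \<in> S"
  shows "(\<Sum>k\<in>S. xs k s * cc k l) = xs l s * cc l l + (\<Sum>k\<in>{k\<in>S. k < l}. xs k s * cc k l)"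
proof -
  have "(\<Sum>k\<in>S. xs k s * cc k l) = xs l s * cc l l + (\<Sum>k\<in>S - {l}. xs k s * cc k l)"
    using assms S_fin by (simp add: sum.remove)
  also have "(\<Sum>k\<in>S - {l}. xs k s * cc k l) = (\<Sum>k\<in>{k\<in>S. k < l}. xs k s * cc k l)"
    using S_fin by (intro sum.mono_neutral_right) (auto, metis cc_lower linorder_neqE_nat mult_zero_right)
  finally show ?thesis .
qed

lemma summ_b: assumes "\<And>k. k < l \<Longrightarrow> summable (xs k)"
  shows "summable (\<lambda>s. \<Sum>k\<in>{k\<in>S. k < l}. xs k s * cc k l)"
  by (intro summable_sum summable_mult2) (use assms in auto)

lemma summ: "l < j0 \<Longrightarrow> summable (xs l)"
proof (induction l rule: less_induct)
  case (less l)
  show ?case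
  proof (cases "l \<in> S")
    case False
    then have "xs l = (\<lambda>_. 0)" using xs_notS by auto
    then show ?thesis by simp
  next
    case True
    have IH: "k < l \<Longrightarrow> summable (xs k)" for k using less by simp
    show ?thesis
    proof (rule summable_rec[where r = "cc l l"])
      show "0 \<le> xs l n" for n by (rule xs_nonneg)
      show "0 \<le> (\<Sum>k\<in>{k\<in>S. k < l}. xs k n * cc k l)" for n
        by (intro sum_nonneg mult_nonneg_nonneg xs_nonneg cc_nonneg)
      show "summable (\<lambda>s. \<Sum>k\<in>{k\<in>S. k < l}. xs k s * cc k l)" by (rule summ_b[OF IH])
      show "0 \<le> cc l l" by (rule cc_nonneg)
      show "cc l l < 1" using cc_lt1 True less.prems by simp
      show "xs l (Suc n) \<le> cc l l * xs l n + (\<Sum>k\<in>{k\<in>S. k < l}. xs k n * cc k l)" for n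
        using rec_ineq[of l n] decomp[OF True, of n] by (simp add: mult.commute)
    qed
  qed
qed

lemma xs_bound: "xs j0 s \<le> xs j0 0 + (\<Sum>s. \<Sum>k\<in>{k\<in>S. k < j0}. xs k s * cc k j0)"
proof (rule bounded_rec)
  show "0 \<le> (\<Sum>k\<in>{k\<in>S. k < j0}. xs k n * cc k j0)" for n
    by (intro sum_nonneg mult_nonneg_nonneg xs_nonneg cc_nonneg)
  show "summable (\<lambda>s. \<Sum>k\<in>{k\<in>S. k < j0}. xs k s * cc k j0)" by (rule summ_b[OF summ])
  show "xs j0 (Suc n) \<le> xs j0 n + (\<Sum>k\<in>{k\<in>S. k < j0}. xs k n * cc k j0)" for n
    using rec_ineq[of j0 n] decomp[OF j0_S, of n] cc_j0 by simp
qed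


lemma mom_mono_Pi: assumes "k \<in> {1..d}"
  shows "mom (\<lambda>\<omega>. Pi s \<omega> k * C (- int s) \<omega> k l) \<le> mom (\<lambda>\<omega>. Pi (Suc s) \<omega> l)"
  unfolding mom_def
proof (intro nn_integral_mono ennreal_leI powr_mono2)
  fix \<omega>
  show "0 \<le> \<alpha> j0" using be_pos' by simp
  show "0 \<le> Pi s \<omega> k * C (- int s) \<omega> k l" using Pi_nonneg C_nonneg by simp
  show "Pi s \<omega> k * C (- int s) \<omega> k l \<le> Pi (Suc s) \<omega> l" by (rule Pi_ge[OF assms])
qed

lemma C_pos: assumes pr: "prec_rel M d A k l" shows "0 < mom (\<lambda>\<omega>. C 0 \<omega> k l)"
proof (rule ccontr)
  assume "\<not> 0 < mom (\<lambda>\<omega>. C 0 \<omega> k l)"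
  then have "mom (\<lambda>\<omega>. C 0 \<omega> k l) = 0" by (simp add: not_less)
  then have ae: "AE \<omega> in M. C 0 \<omega> k l = 0" by (rule mom_zero_AE[OF C_meas C_nonneg])
  have kl: "k \<in> {1..d}" "l \<in> {1..d}" using prec_in[OF pr] by auto
  have ae2: "AE \<omega> in M. A 0 \<omega> k l \<le> 0"
    using ae by eventually_elim (simp add: C_prec[OF pr])
  have set: "{\<omega>\<in>space M. A 0 \<omega> k l > 0} \<in> sets M" using A_meas[OF kl] by measurable
  have q: "{\<omega>\<in>space M. \<not> A 0 \<omega> k l \<le> 0} = {\<omega>\<in>space M. A 0 \<omega> k l > 0}" by auto
  have "emeasure M {\<omega>\<in>space M. A 0 \<omega> k l > 0} = 0" using AE_iff_measurable[OF set q] ae2 by simp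
  then have "measure M {\<omega>\<in>space M. A 0 \<omega> k l > 0} = 0" by (simp add: measure_def)
  then show False using pr unfolding prec_rel_def by simp
qed

lemma pos_l: "trile M d A i l \<Longrightarrow> \<exists>s. 0 < mom (\<lambda>\<omega>. Pi s \<omega> l)"
  unfolding trile_def
proof (induction rule: rtranclp_induct)
  case base
  have "mom (\<lambda>\<omega>. Pi 0 \<omega> i) = 1" unfolding mom_def by (simp add: Pi_0 emeasure_space_1)
  then show ?case by (intro exI[of _ 0]) simp
next
  case (step k l)
  obtain s where s: "0 < mom (\<lambda>\<omega>. Pi s \<omega> k)" using step.IH by blast
  have k: "k \<in> {1..d}" using prec_in[OF step.hyps(2)] by simp
  have "0 < mom (\<lambda>\<omega>. Pi s \<omega> k) * mom (\<lambda>\<omega>. C 0 \<omega> k l)"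
    using s C_pos[OF step.hyps(2)] by (simp add: ennreal_zero_less_mult_iff)
  also have "\<dots> = mom (\<lambda>\<omega>. Pi s \<omega> k * C (- int s) \<omega> k l)" by (simp add: mom_Cprod)
  also have "\<dots> \<le> mom (\<lambda>\<omega>. Pi (Suc s) \<omega> l)" by (rule mom_mono_Pi[OF k])
  finally show ?case by blast
qed

lemma main:
  "\<exists>u. ((\<lambda>s. \<integral>\<^sup>+\<omega>. ennreal (pi_prod d A s \<omega> i j0 powr \<alpha> j0) \<partial>M) \<longlonglongrightarrow> u) \<and> 0 < u \<and> u < \<infinity>"
proof -
  define u where "u s = mom (\<lambda>\<omega>. Pi s \<omega> j0)" for s
  have ueq: "(\<lambda>s. \<integral>\<^sup>+\<omega>. ennreal (pi_prod d A s \<omega> i j0 powr \<alpha> j0) \<partial>M) = u"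
  proof
    fix s
    show "(\<integral>\<^sup>+\<omega>. ennreal (pi_prod d A s \<omega> i j0 powr \<alpha> j0) \<partial>M) = u s"
      unfolding u_def mom_def
      by (rule nn_integral_cong_AE) (use AE_Pi[of s] j0_in in \<open>auto elim!: AE_mp\<close>)
  qed
  have cj: "mom (\<lambda>\<omega>. C 0 \<omega> j0 j0) = 1" using mom_C0A[OF j0_in j0_in] T4c[OF j0_in] by simp
  have inc: "incseq u"
  proof (rule incseq_SucI)
    fix s
    have "u s = mom (\<lambda>\<omega>. Pi s \<omega> j0) * mom (\<lambda>\<omega>. C 0 \<omega> j0 j0)" unfolding u_def cj by simp
    also have "\<dots> = mom (\<lambda>\<omega>. Pi s \<omega> j0 * C (- int s) \<omega> j0 j0)" by (simp add: mom_Cprod)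
    also have "\<dots> \<le> u (Suc s)" unfolding u_def by (rule mom_mono_Pi[OF j0_in])
    finally show "u s \<le> u (Suc s)" .
  qed
  define K where "K = xs j0 0 + (\<Sum>s. \<Sum>k\<in>{k\<in>S. k < j0}. xs k s * cc k j0)"
  have bnd: "u s \<le> ennreal (K powr pp)" for s
  proof -
    have "u s = ennreal (xs j0 s powr pp)" unfolding u_def xs_def by (rule mom_eq_nrm[OF Pi_fin])
    also have "\<dots> \<le> ennreal (K powr pp)"
      using xs_bound[of s] xs_nonneg pp_pos unfolding K_def by (intro ennreal_leI powr_mono2) auto
    finally show ?thesis .
  qed
  obtain s0 where s0: "0 < u s0" using pos_l[of j0] lt unfolding trilt_def u_def by blast
  have lim: "u \<longlonglongrightarrow> (SUP s. u s)" by (rule LIMSEQ_SUP[OF inc])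
  have "0 < (SUP s. u s)" using s0 by (rule less_le_trans) (rule SUP_upper, simp)
  moreover have "(SUP s. u s) < \<infinity>"
  proof -
    have "(SUP s. u s) \<le> ennreal (K powr pp)" by (rule SUP_least) (rule bnd)
    then show ?thesis unfolding infinity_ennreal_def using ennreal_less_top by (rule le_less_trans)
  qed
  ultimately show ?thesis using lim ueq by auto
qed

end

theorem lemma5p7:
  fixes M :: "'a measure" and d :: nat
    and A :: "int \<Rightarrow> 'a \<Rightarrow> nat \<Rightarrow> nat \<Rightarrow> real" and B :: "int \<Rightarrow> 'a \<Rightarrow> nat \<Rightarrow> real"
    and \<alpha> :: "nat \<Rightarrow> real" and i j0 :: nat
  assumes "prob_space M"
    and "iid_AB M d A B"
    and "condT M d A B \<alpha>"
    and "i \<in> {1..d}" and "j0 \<in> {1..d}"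
    and "trilt M d A i j0"
    and "\<alpha> i > alpha_tilde M d A \<alpha> i"
    and "alpha_tilde M d A \<alpha> i = \<alpha> j0"
  shows "\<exists>u. ((\<lambda>s. \<integral>\<^sup>+\<omega>. ennreal (pi_prod d A s \<omega> i j0 powr \<alpha> j0) \<partial>M) \<longlonglongrightarrow> u)
             \<and> 0 < u \<and> u < \<infinity>"
proof -
  interpret L5 M d A B \<alpha> i j0
    by (intro L5.intro L5_axioms.intro assms)
  show ?thesis by (rule main)
qed


end
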